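(* Let $K$ be a finite field, $G$ a finite group and $C$ a right ideal of the group algebra $KG$. Then $C$ is checkable if and only if the orthogonal space $C^\perp$ (with respect to the standard bilinear form on $KG$) is a principal right ideal of $KG$.
   Context: $KG$ is the group algebra with $K$-basis $\{g: g\in G\}$. It carries the symmetric nondegenerate bilinear form $\langle\cdot,\cdot\rangle$ defined by $\langle g,h\rangle=\delta_{g,h}$ for $g,h\in G$, and $C^\perp=\{a\in KG:\langle a,c\rangle=0 \text{ for all } c\in C\}$. For $C\subseteq KG$, $\operatorname{ann}_r(C)=\{a\in KG: ca=0 \ \forall c\in C\}$. A right ideal $I\le KG$ is called checkable if there is $v\in KG$ with $I=\{a\in KG: va=0\}=\operatorname{ann}_r(KGv)$. *)

theory Defs
  imports "HOL-Algebra.Group"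
begin

text \<open>The group algebra KG of a finite group G (HOL-Algebra structure) over a field
of type 'k: elements are functions from the group elements to 'k vanishing
outside the carrier; the basis element g corresponds to the indicator of g.\<close>

definition group_alg :: "('g, 'b) monoid_scheme \<Rightarrow> ('g \<Rightarrow> 'k::field) set" where
  "group_alg G = {a. \<forall>x. x \<notin> carrier G \<longrightarrow> a x = 0}"

definition ga_add :: "('g \<Rightarrow> 'k::field) \<Rightarrow> ('g \<Rightarrow> 'k) \<Rightarrow> ('g \<Rightarrow> 'k)" where
  "ga_add a b = (\<lambda>x. a x + b x)"

definition ga_mult :: "('g, 'b) monoid_scheme \<Rightarrow> ('g \<Rightarrow> 'k::field) \<Rightarrow> ('g \<Rightarrow> 'k) \<Rightarrow> ('g \<Rightarrow> 'k)" where
  "ga_mult G a b = (\<lambda>x. if x \<in> carrier G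
      then (\<Sum>y\<in>carrier G. a y * b (inv\<^bsub>G\<^esub> y \<otimes>\<^bsub>G\<^esub> x)) else 0)"

definition ga_form :: "('g, 'b) monoid_scheme \<Rightarrow> ('g \<Rightarrow> 'k::field) \<Rightarrow> ('g \<Rightarrow> 'k) \<Rightarrow> 'k" where
  "ga_form G a b = (\<Sum>g\<in>carrier G. a g * b g)"

definition ga_perp :: "('g, 'b) monoid_scheme \<Rightarrow> ('g \<Rightarrow> 'k::field) set \<Rightarrow> ('g \<Rightarrow> 'k) set" where
  "ga_perp G C = {a \<in> group_alg G. \<forall>c\<in>C. ga_form G a c = 0}"

definition right_ideal :: "('g, 'b) monoid_scheme \<Rightarrow> ('g \<Rightarrow> 'k::field) set \<Rightarrow> bool" where
  "right_ideal G I \<longleftrightarrow> I \<subseteq> group_alg G \<and> (\<lambda>_. 0) \<in> I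
     \<and> (\<forall>a\<in>I. \<forall>b\<in>I. ga_add a b \<in> I)
     \<and> (\<forall>a\<in>I. (\<lambda>x. - a x) \<in> I)
     \<and> (\<forall>a\<in>I. \<forall>r\<in>group_alg G. ga_mult G a r \<in> I)"

definition principal_right_ideal :: "('g, 'b) monoid_scheme \<Rightarrow> ('g \<Rightarrow> 'k::field) set \<Rightarrow> bool" where
  "principal_right_ideal G I \<longleftrightarrow>
     (\<exists>g\<in>group_alg G. I = {ga_mult G g r | r. r \<in> group_alg G})"

definition checkable :: "('g, 'b) monoid_scheme \<Rightarrow> ('g \<Rightarrow> 'k::field) set \<Rightarrow> bool" where
  "checkable G I \<longleftrightarrow>
     (\<exists>v\<in>group_alg G. I = {a \<in> group_alg G. ga_mult G v a = (\<lambda>_. 0)})"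

end

theory Submission
  imports Defs
begin

definition sc :: "'k::field \<Rightarrow> ('g \<Rightarrow> 'k) \<Rightarrow> ('g \<Rightarrow> 'k)" where
  "sc k a = (\<lambda>x. k * a x)"

definition star :: "('g, 'b) monoid_scheme \<Rightarrow> ('g \<Rightarrow> 'k::field) \<Rightarrow> ('g \<Rightarrow> 'k)" where
  "star G a = (\<lambda>x. if x \<in> carrier G then a (inv\<^bsub>G\<^esub> x) else 0)"

definition dlt :: "'g \<Rightarrow> ('g \<Rightarrow> 'k::field)" where
  "dlt g = (\<lambda>x. if x = g then 1 else 0)"

definition subsp :: "('g, 'b) monoid_scheme \<Rightarrow> ('g \<Rightarrow> 'k::field) set \<Rightarrow> bool" where
  "subsp G S \<longleftrightarrow> S \<subseteq> group_alg G \<and> (\<lambda>_. 0) \<in> S \<and> (\<forall>a\<in>S. \<forall>b\<in>S. ga_add a b \<in> S)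
     \<and> (\<forall>k. \<forall>a\<in>S. sc k a \<in> S)"

lemma card_filter_sum: "finite A \<Longrightarrow> card {x\<in>A. P x} = (\<Sum>x\<in>A. if P x then 1 else 0 :: nat)"
  by (simp add: sum.If_cases Int_def conj_commute)

lemma card_field_ge2: "card (UNIV::'k::{field,finite} set) \<ge> 2"
proof -
  have "card {0::'k, 1} = 2" by simp
  moreover have "card {0::'k, 1} \<le> card (UNIV::'k set)" by (rule card_mono) auto
  ultimately show ?thesis by simp
qed

lemma count_kernel:
  fixes W :: "('g \<Rightarrow> 'k::{field,finite}) set" and f :: "('g \<Rightarrow> 'k) \<Rightarrow> 'k"
  assumes fin: "finite W"
    and add: "\<And>a b. a \<in> W \<Longrightarrow> b \<in> W \<Longrightarrow> ga_add a b \<in> W"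
    and scl: "\<And>k a. a \<in> W \<Longrightarrow> sc k a \<in> W"
    and fadd: "\<And>a b. a \<in> W \<Longrightarrow> b \<in> W \<Longrightarrow> f (ga_add a b) = f a + f b"
    and fsc: "\<And>k a. a \<in> W \<Longrightarrow> f (sc k a) = k * f a"
    and w0: "wz \<in> W" "f wz \<noteq> 0"
  shows "card W = card (UNIV::'k set) * card {w\<in>W. f w = 0}"
proof -
  define u where "u = sc (inverse (f wz)) wz"
  have uW: "u \<in> W" using scl w0 by (simp add: u_def)
  have fu: "f u = 1" using fsc w0 by (simp add: u_def)
  define F where "F t = {w\<in>W. f w = t}" for t
  have cardF: "card (F t) = card (F 0)" for t
  proof -
    have "(\<lambda>x. ga_add x (sc t u)) ` F 0 = F t"
    proof
      show "(\<lambda>x. ga_add x (sc t u)) ` F 0 \<subseteq> F t"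
        using add scl fadd fsc uW fu by (auto simp: F_def)
    next
      show "F t \<subseteq> (\<lambda>x. ga_add x (sc t u)) ` F 0"
      proof
        fix y assume y: "y \<in> F t"
        define x where "x = ga_add y (sc (-t) u)"
        have xW: "x \<in> W" using y add scl uW by (auto simp: F_def x_def)
        have "f x = 0" using y fadd fsc uW scl fu by (auto simp: F_def x_def)
        moreover have "y = ga_add x (sc t u)"
          by (simp add: x_def ga_add_def sc_def fun_eq_iff algebra_simps)
        ultimately show "y \<in> (\<lambda>x. ga_add x (sc t u)) ` F 0" using xW by (auto simp: F_def)
      qed
    qed
    moreover have "inj_on (\<lambda>x. ga_add x (sc t u)) (F 0)"
      by (rule inj_onI) (simp add: ga_add_def fun_eq_iff)
    ultimately show ?thesis by (metis card_image)
  qed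
  have "W = (\<Union>t\<in>UNIV. F t)" by (auto simp: F_def)
  hence "card W = card (\<Union>t\<in>UNIV. F t)" by simp
  also have "\<dots> = (\<Sum>t\<in>UNIV. card (F t))"
    by (rule card_UN_disjoint) (auto simp: F_def intro: finite_subset[OF _ fin])
  also have "\<dots> = (\<Sum>t\<in>(UNIV::'k set). card (F 0))" by (intro sum.cong refl cardF)
  also have "\<dots> = card (UNIV::'k set) * card (F 0)" by simp
  finally show ?thesis by (simp add: F_def)
qed

locale ga = group G for G :: "('g, 'b) monoid_scheme" (structure) +
  assumes fin: "finite (carrier G)"
begin

lemma finV: "finite (group_alg G :: ('g \<Rightarrow> 'k::{field,finite}) set)"
proof -
  have "group_alg G = {f::'g\<Rightarrow>'k. \<forall>x. (x \<in> carrier G \<longrightarrow> f x \<in> UNIV) \<and> (x \<notin> carrier G \<longrightarrow> f x = 0)}"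
    by (auto simp: group_alg_def)
  thus ?thesis using finite_set_of_finite_funs[OF fin finite_UNIV, of 0] by simp
qed

lemma V_add: "a \<in> group_alg G \<Longrightarrow> b \<in> group_alg G \<Longrightarrow> ga_add a b \<in> group_alg G"
  by (simp add: group_alg_def ga_add_def)
lemma V_sc: "a \<in> group_alg G \<Longrightarrow> sc k a \<in> group_alg G"
  by (simp add: group_alg_def sc_def)
lemma V_zero: "(\<lambda>_. 0) \<in> group_alg G"
  by (simp add: group_alg_def)
lemma V_mult: "ga_mult G a b \<in> group_alg G"
  by (simp add: group_alg_def ga_mult_def)
lemma V_star: "star G a \<in> group_alg G"
  by (simp add: group_alg_def star_def)
lemma V_dlt: "g \<in> carrier G \<Longrightarrow> dlt g \<in> group_alg G"
  by (auto simp: group_alg_def dlt_def)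

lemma star_star: "a \<in> group_alg G \<Longrightarrow> star G (star G a) = a"
  by (auto simp: star_def fun_eq_iff group_alg_def)

lemma form_sym: "ga_form G a b = ga_form G b a"
  by (simp add: ga_form_def mult.commute)

lemma form_dlt: "g \<in> carrier G \<Longrightarrow> ga_form G x (dlt g) = x g"
proof -
  assume g: "g \<in> carrier G"
  have "ga_form G x (dlt g) = (\<Sum>h\<in>carrier G. if h = g then x h else 0)"
    by (auto simp: ga_form_def dlt_def intro!: sum.cong)
  also have "\<dots> = x g" using g fin by (simp add: sum.delta')
  finally show ?thesis .
qed

lemma zero_of_form:
  assumes "x \<in> group_alg G" "\<And>r. r \<in> group_alg G \<Longrightarrow> ga_form G x r = 0"
  shows "x = (\<lambda>_. 0)"
proof
  fix g show "x g = 0"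
  proof (cases "g \<in> carrier G")
    case True thus ?thesis using assms(2)[OF V_dlt[OF True]] form_dlt[OF True, of x] by metis
  next
    case False thus ?thesis using assms(1) by (simp add: group_alg_def)
  qed
qed

lemma form_mult:
  assumes a: "a \<in> group_alg G" and c: "c \<in> group_alg G" and r: "r \<in> group_alg G"
  shows "ga_form G a (ga_mult G c r) = ga_form G (ga_mult G (star G c) a) r"
proof -
  have "ga_form G a (ga_mult G c r) = (\<Sum>x\<in>carrier G. \<Sum>y\<in>carrier G. a x * c y * r (inv y \<otimes> x))"
    by (simp add: ga_form_def ga_mult_def sum_distrib_left mult.assoc)
  also have "\<dots> = (\<Sum>y\<in>carrier G. \<Sum>x\<in>carrier G. a x * c y * r (inv y \<otimes> x))"
    by (rule sum.swap)
  also have "\<dots> = (\<Sum>y\<in>carrier G. \<Sum>g\<in>carrier G. c y * a (y \<otimes> g) * r g)"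
  proof (rule sum.cong[OF refl])
    fix y assume y: "y \<in> carrier G"
    show "(\<Sum>x\<in>carrier G. a x * c y * r (inv y \<otimes> x)) = (\<Sum>g\<in>carrier G. c y * a (y \<otimes> g) * r g)"
      by (rule sum.reindex_bij_witness[of _ "\<lambda>g. y \<otimes> g" "\<lambda>x. inv y \<otimes> x"])
         (use y in \<open>auto simp: m_assoc[symmetric] mult.commute mult.left_commute\<close>)
  qed
  also have "\<dots> = (\<Sum>y\<in>carrier G. \<Sum>g\<in>carrier G. c (inv y) * a (inv y \<otimes> g) * r g)"
    by (rule sum.reindex_bij_witness[of _ "\<lambda>y. inv y" "\<lambda>y. inv y"]) auto
  also have "\<dots> = (\<Sum>g\<in>carrier G. \<Sum>y\<in>carrier G. c (inv y) * a (inv y \<otimes> g) * r g)"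
    by (rule sum.swap)
  also have "\<dots> = ga_form G (ga_mult G (star G c) a) r"
    by (simp add: ga_form_def ga_mult_def star_def sum_distrib_right)
  finally show ?thesis .
qed

lemma inv_mult_one_iff: "x \<in> carrier G \<Longrightarrow> y \<in> carrier G \<Longrightarrow> (inv y \<otimes> x = \<one>) = (y = x)"
  by (metis inv_equality inv_inv inv_closed l_inv)

lemma mult_sc_dlt:
  assumes c: "c \<in> group_alg G"
  shows "ga_mult G c (sc k (dlt \<one>)) = sc k c"
proof
  fix x show "ga_mult G c (sc k (dlt \<one>)) x = sc k c x"
  proof (cases "x \<in> carrier G")
    case True
    have "ga_mult G c (sc k (dlt \<one>)) x = (\<Sum>y\<in>carrier G. if y = x then c y * k else 0)"
      using True by (auto simp: ga_mult_def sc_def dlt_def inv_mult_one_iff intro!: sum.cong)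
    also have "\<dots> = c x * k" using True fin by (simp add: sum.delta')
    finally show ?thesis by (simp add: sc_def mult.commute)
  next
    case False thus ?thesis using c by (simp add: ga_mult_def sc_def group_alg_def)
  qed
qed

lemma form_add_l: "ga_form G (ga_add a b) c = ga_form G a c + ga_form G b c"
  by (simp add: ga_form_def ga_add_def distrib_right sum.distrib)
lemma form_sc_l: "ga_form G (sc k a) c = k * ga_form G a c"
  by (simp add: ga_form_def sc_def sum_distrib_left mult.assoc)
lemma form_zero_l: "ga_form G (\<lambda>_. 0) c = 0"
  by (simp add: ga_form_def)
lemma form_add_r: "ga_form G c (ga_add a b) = ga_form G c a + ga_form G c b"
  using form_add_l form_sym by metis
lemma form_sc_r: "ga_form G c (sc k a) = k * ga_form G c a"
  using form_sc_l form_sym by metis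
lemma form_zero_r: "ga_form G c (\<lambda>_. 0) = 0"
  using form_zero_l form_sym by metis

lemma mult_add_r: "ga_mult G w (ga_add r1 r2) = ga_add (ga_mult G w r1) (ga_mult G w r2)"
  by (simp add: ga_mult_def ga_add_def fun_eq_iff distrib_left sum.distrib)
lemma mult_sc_r: "ga_mult G w (sc k r) = sc k (ga_mult G w r)"
  by (simp add: ga_mult_def sc_def fun_eq_iff sum_distrib_left mult.left_commute)
lemma mult_zero_r: "ga_mult G w (\<lambda>_. 0) = (\<lambda>_. 0)"
  by (simp add: ga_mult_def fun_eq_iff)

lemma subsp_perp: "subsp G (ga_perp G S)"
  by (auto simp: subsp_def ga_perp_def V_add V_sc V_zero form_add_l form_sc_l form_zero_l)

lemma subsp_ri: assumes "right_ideal G C" shows "subsp G C"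
proof -
  have "sc k c \<in> C" if "c \<in> C" for k c
  proof -
    have "c \<in> group_alg G" using assms that by (auto simp: right_ideal_def)
    hence "sc k c = ga_mult G c (sc k (dlt \<one>))" by (simp add: mult_sc_dlt)
    moreover have "sc k (dlt \<one>) \<in> group_alg G" by (simp add: V_sc V_dlt)
    ultimately show ?thesis using assms that by (auto simp: right_ideal_def)
  qed
  thus ?thesis using assms by (auto simp: subsp_def right_ideal_def)
qed

lemma subsp_img: "subsp G {ga_mult G w r | r. r \<in> group_alg G}"
proof -
  have "(\<lambda>_. 0) = ga_mult G w (\<lambda>_. 0)" by (simp add: mult_zero_r)
  hence z: "(\<lambda>_. 0) \<in> {ga_mult G w r | r. r \<in> group_alg G}" using V_zero by blast
  show ?thesis unfolding subsp_def
    using z by (auto simp: V_mult mult_add_r[symmetric] mult_sc_r[symmetric] intro!: V_add V_sc)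
qed

lemma perp_count:
  fixes S :: "('g \<Rightarrow> 'k::{field,finite}) set"
  assumes S: "subsp G S"
  shows "card S * card (ga_perp G S) = card (group_alg G :: ('g \<Rightarrow> 'k) set)"
proof -
  define V where "V = (group_alg G :: ('g \<Rightarrow> 'k) set)"
  define P where "P = ga_perp G S"
  define q where "q = card (UNIV :: 'k set)"
  define I where "I (a::'g \<Rightarrow> 'k) s = (if ga_form G a s = 0 then 1 else (0::nat))" for a s
  have SV: "S \<subseteq> V" using S by (simp add: subsp_def V_def)
  have finV': "finite V" using finV by (simp add: V_def)
  have finS: "finite S" using finite_subset[OF SV finV'] .
  have PV: "P \<subseteq> V" by (auto simp: P_def ga_perp_def V_def)
  have z: "(\<lambda>_. 0) \<in> S" using S by (simp add: subsp_def)
  have q2: "q \<ge> 2" using card_field_ge2 by (simp add: q_def)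
  define N where "N = (\<Sum>s\<in>S. \<Sum>a\<in>V. I a s)"
  have N2: "N = (\<Sum>a\<in>V. \<Sum>s\<in>S. I a s)" unfolding N_def by (rule sum.swap)
  have A0: "(\<Sum>a\<in>V. I a (\<lambda>_. 0)) = card V"
    by (simp add: I_def form_zero_r)
  have A1: "q * (\<Sum>a\<in>V. I a s) = card V" if s: "s \<in> S - {\<lambda>_. 0}" for s
  proof -
    have sV: "s \<in> V" using s SV by auto
    obtain g where g: "s g \<noteq> 0" using s by (auto simp: fun_eq_iff)
    hence gc: "g \<in> carrier G" using sV by (auto simp: V_def group_alg_def)
    have "card V = q * card {a\<in>V. ga_form G a s = 0}"
      unfolding q_def
    proof (rule count_kernel[where wz = "dlt g"])
      show "finite V" by (rule finV')
      show "dlt g \<in> V" using gc by (simp add: V_def V_dlt)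
      show "ga_form G (dlt g) s \<noteq> 0" using g gc form_dlt form_sym by metis
    qed (auto simp: V_def V_add V_sc form_add_l form_sc_l)
    thus ?thesis by (simp add: I_def card_filter_sum[OF finV'])
  qed
  have "q * N = q * (\<Sum>a\<in>V. I a (\<lambda>_. 0)) + (\<Sum>s\<in>S - {\<lambda>_. 0}. q * (\<Sum>a\<in>V. I a s))"
    unfolding N_def sum_distrib_left by (rule sum.remove[OF finS z])
  also have "\<dots> = q * card V + (card S - 1) * card V"
    using A0 A1 by (simp add: card_Diff_singleton[OF z])
  finally have E1: "q * N = q * card V + (card S - 1) * card V" .
  have B0: "(\<Sum>s\<in>S. I a s) = card S" if a: "a \<in> P" for a
    using a by (auto simp: I_def P_def ga_perp_def)
  have B1: "q * (\<Sum>s\<in>S. I a s) = card S" if a: "a \<in> V - P" for a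
  proof -
    obtain c where c: "c \<in> S" "ga_form G a c \<noteq> 0" using a by (auto simp: P_def ga_perp_def V_def)
    have "card S = q * card {s\<in>S. ga_form G a s = 0}"
      unfolding q_def
    proof (rule count_kernel[where wz = c])
      show "finite S" by (rule finS)
    qed (use S c in \<open>auto simp: subsp_def form_add_r form_sc_r\<close>)
    thus ?thesis by (simp add: I_def card_filter_sum[OF finS])
  qed
  have "q * N = (\<Sum>a\<in>V - P. q * (\<Sum>s\<in>S. I a s)) + (\<Sum>a\<in>P. q * (\<Sum>s\<in>S. I a s))"
    unfolding N2 using sum.subset_diff[OF PV finV'] by (simp add: sum_distrib_left)
  also have "\<dots> = (card V - card P) * card S + card P * (q * card S)"
    using B0 B1 finite_subset[OF PV finV'] card_Diff_subset[OF finite_subset[OF PV finV'] PV] by simp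
  finally have E2: "q * N = (card V - card P) * card S + card P * (q * card S)" .
  have m1: "card S \<ge> 1" using z finS by (metis One_nat_def Suc_leI card_gt_0_iff empty_iff)
  have pv: "card P \<le> card V" using PV finV' by (rule card_mono[rotated])
  have E: "q * card V + (card S - 1) * card V = (card V - card P) * card S + card P * (q * card S)"
    using E1 E2 by simp
  hence "int (q * card V + (card S - 1) * card V) = int ((card V - card P) * card S + card P * (q * card S))"
    by simp
  hence Ei: "int q * int (card V) + (int (card S) - 1) * int (card V)
      = (int (card V) - int (card P)) * int (card S) + int (card P) * (int q * int (card S))"
    using m1 pv by (simp add: of_nat_diff)
  have "(int q - 1) * (int (card V) - int (card S) * int (card P))
      = (int q * int (card V) + (int (card S) - 1) * int (card V))
        - ((int (card V) - int (card P)) * int (card S) + int (card P) * (int q * int (card S)))"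
    by (simp add: algebra_simps)
  also have "\<dots> = 0" using Ei by simp
  finally have "int (card V) = int (card S) * int (card P)" using q2 by simp
  hence "card V = card S * card P" by (metis of_nat_eq_iff of_nat_mult)
  thus ?thesis by (simp add: V_def P_def)
qed

lemma perp_perp:
  fixes S :: "('g \<Rightarrow> 'k::{field,finite}) set"
  assumes S: "subsp G S"
  shows "ga_perp G (ga_perp G S) = S"
proof -
  have sub: "S \<subseteq> ga_perp G (ga_perp G S)"
    using S by (auto simp: subsp_def ga_perp_def form_sym)
  have c1: "card S * card (ga_perp G S) = card (group_alg G :: ('g \<Rightarrow> 'k) set)"
    by (rule perp_count[OF S])
  have c2: "card (ga_perp G S) * card (ga_perp G (ga_perp G S)) = card (group_alg G :: ('g \<Rightarrow> 'k) set)"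
    by (rule perp_count[OF subsp_perp])
  have "card (group_alg G :: ('g \<Rightarrow> 'k) set) > 0"
    using finV V_zero by (metis card_gt_0_iff empty_iff)
  hence "card (ga_perp G S) > 0" using c1 by (metis mult_0_right neq0_conv)
  hence eq: "card S = card (ga_perp G (ga_perp G S))" using c1 c2 by (metis mult.commute mult_left_cancel neq0_conv)
  have "finite (ga_perp G (ga_perp G S) :: ('g \<Rightarrow> 'k) set)"
    by (rule finite_subset[OF _ finV]) (auto simp: ga_perp_def)
  thus ?thesis using card_subset_eq[OF _ sub eq] by simp
qed

end


theorem mainTheorem3:
  fixes G :: "('g, 'b) monoid_scheme" and C :: "('g \<Rightarrow> 'k::{field,finite}) set"
  assumes "group G" and "finite (carrier G)" and "right_ideal G C"
  shows "checkable G C \<longleftrightarrow> principal_right_ideal G (ga_perp G C)"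
proof -
  interpret ga G using assms(1,2) by (simp add: ga_def ga_axioms_def)
  have CS: "subsp G C" by (rule subsp_ri[OF assms(3)])
  have CV: "C \<subseteq> group_alg G" using assms(3) by (simp add: right_ideal_def)
  show ?thesis
  proof
    assume "checkable G C"
    then obtain v where v: "v \<in> group_alg G" and Cdef: "C = {a \<in> group_alg G. ga_mult G v a = (\<lambda>_. 0)}"
      by (auto simp: checkable_def)
    define D where "D = {ga_mult G (star G v) r | r. r \<in> group_alg G}"
    have DP: "D \<subseteq> ga_perp G C"
    proof
      fix d assume "d \<in> D"
      then obtain r where r: "r \<in> group_alg G" and d: "d = ga_mult G (star G v) r" by (auto simp: D_def)
      have "ga_form G d c = 0" if c: "c \<in> C" for c
      proof -
        have cV: "c \<in> group_alg G" and cv: "ga_mult G v c = (\<lambda>_. 0)" using c Cdef by auto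
        have "ga_form G d c = ga_form G c (ga_mult G (star G v) r)" by (simp add: d form_sym)
        also have "\<dots> = ga_form G (ga_mult G v c) r"
          using form_mult[OF cV V_star r] star_star[OF v] by simp
        also have "\<dots> = 0" by (simp add: cv form_zero_l)
        finally show ?thesis .
      qed
      thus "d \<in> ga_perp G C" by (auto simp: ga_perp_def d V_mult)
    qed
    have PD: "ga_perp G D = C"
    proof
      show "ga_perp G D \<subseteq> C"
      proof
        fix a assume a: "a \<in> ga_perp G D"
        hence aV: "a \<in> group_alg G" by (simp add: ga_perp_def)
        have "ga_mult G v a = (\<lambda>_. 0)"
        proof (rule zero_of_form[OF V_mult])
          fix r :: "'g \<Rightarrow> 'k" assume r: "r \<in> group_alg G"
          have "ga_form G (ga_mult G v a) r = ga_form G a (ga_mult G (star G v) r)"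
            using form_mult[OF aV V_star r] star_star[OF v] by simp
          also have "\<dots> = 0" using a r by (auto simp: ga_perp_def D_def)
          finally show "ga_form G (ga_mult G v a) r = 0" .
        qed
        thus "a \<in> C" using aV Cdef by simp
      qed
    next
      show "C \<subseteq> ga_perp G D"
      proof
        fix a assume a: "a \<in> C"
        hence aV: "a \<in> group_alg G" and av: "ga_mult G v a = (\<lambda>_. 0)" using Cdef by auto
        have "ga_form G a d = 0" if d: "d \<in> D" for d
        proof -
          obtain r where r: "r \<in> group_alg G" and dd: "d = ga_mult G (star G v) r" using d by (auto simp: D_def)
          have "ga_form G a d = ga_form G (ga_mult G v a) r"
            using form_mult[OF aV V_star r] star_star[OF v] dd by simp
          thus ?thesis by (simp add: av form_zero_l)
        qed
        thus "a \<in> ga_perp G D" using aV by (simp add: ga_perp_def)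
      qed
    qed
    have DS: "subsp G D" unfolding D_def by (rule subsp_img)
    have c1: "card D * card C = card (group_alg G :: ('g \<Rightarrow> 'k) set)"
      using perp_count[OF DS] PD by simp
    have c2: "card C * card (ga_perp G C) = card (group_alg G :: ('g \<Rightarrow> 'k) set)"
      by (rule perp_count[OF CS])
    have "card (group_alg G :: ('g \<Rightarrow> 'k) set) > 0"
      using finV V_zero by (metis card_gt_0_iff empty_iff)
    hence "card C > 0" using c2 by (metis mult_0 neq0_conv)
    hence eq: "card D = card (ga_perp G C)" using c1 c2 by (metis mult.commute mult_left_cancel neq0_conv)
    have "finite (ga_perp G C)"
      by (rule finite_subset[OF _ finV]) (auto simp: ga_perp_def)
    hence "D = ga_perp G C" using card_subset_eq[OF _ DP eq] by simp
    thus "principal_right_ideal G (ga_perp G C)"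
      unfolding principal_right_ideal_def D_def using V_star by blast
  next
    assume "principal_right_ideal G (ga_perp G C)"
    then obtain w where w: "w \<in> group_alg G" and P: "ga_perp G C = {ga_mult G w r | r. r \<in> group_alg G}"
      by (auto simp: principal_right_ideal_def)
    have "C = {a \<in> group_alg G. ga_mult G (star G w) a = (\<lambda>_. 0)}"
    proof
      show "C \<subseteq> {a \<in> group_alg G. ga_mult G (star G w) a = (\<lambda>_. 0)}"
      proof
        fix c assume c: "c \<in> C"
        hence cV: "c \<in> group_alg G" using CV by auto
        have "ga_mult G (star G w) c = (\<lambda>_. 0)"
        proof (rule zero_of_form[OF V_mult])
          fix r :: "'g \<Rightarrow> 'k" assume r: "r \<in> group_alg G"
          have "ga_form G (ga_mult G (star G w) c) r = ga_form G c (ga_mult G w r)"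
            using form_mult[OF cV w r] by simp
          also have "\<dots> = ga_form G (ga_mult G w r) c" by (rule form_sym)
          also have "\<dots> = 0"
          proof -
            have "ga_mult G w r \<in> ga_perp G C" using P r by blast
            thus ?thesis using c by (simp add: ga_perp_def)
          qed
          finally show "ga_form G (ga_mult G (star G w) c) r = 0" .
        qed
        thus "c \<in> {a \<in> group_alg G. ga_mult G (star G w) a = (\<lambda>_. 0)}" using cV by simp
      qed
    next
      show "{a \<in> group_alg G. ga_mult G (star G w) a = (\<lambda>_. 0)} \<subseteq> C"
      proof
        fix a assume "a \<in> {a \<in> group_alg G. ga_mult G (star G w) a = (\<lambda>_. 0)}"
        hence aV: "a \<in> group_alg G" and aw: "ga_mult G (star G w) a = (\<lambda>_. 0)" by auto
        have "ga_form G a d = 0" if d: "d \<in> ga_perp G C" for d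
        proof -
          obtain r where r: "r \<in> group_alg G" and dd: "d = ga_mult G w r" using d P by auto
          have "ga_form G a d = ga_form G (ga_mult G (star G w) a) r"
            using form_mult[OF aV w r] dd by simp
          thus ?thesis by (simp add: aw form_zero_l)
        qed
        hence "a \<in> ga_perp G (ga_perp G C)" using aV by (simp add: ga_perp_def)
        thus "a \<in> C" using perp_perp[OF CS] by simp
      qed
    qed
    thus "checkable G C" unfolding checkable_def using V_star by blast
  qed
qed

end
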